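(* Let $K$ be an $\mathcal R$-dioid, $n\in\mathbb N$, $X\in(Z_{C_2'}K)^{n\times n}$, $U\in\{0,b,p\}^{n\times n}$ and $V\in\{0,d,q\}^{n\times n}$. In $\mathrm{Mat}_{n\times n}(K\otimes_{\mathcal R}C_2')$, the inequation \[ y\ge (UyV+X)^* \] has a least solution, namely $N:=b(Up+X+qV)^*d$, and $N\in(Z_{C_2'}K)^{n\times n}$.
   Context: An $\mathcal R$-dioid is a dioid in which every regular subset of the multiplicative monoid has a supremum $\sum A$ with $\sum(AB)=(\sum A)(\sum B)$; equivalently a $*$-continuous Kleene algebra. An $\mathcal R$-congruence is a semiring congruence such that regular sets with equal downward closures modulo it have congruent suprema. $C_2'=\mathcal R\Delta_2^*/\rho$ where $\Delta_2=\{b,p,d,q\}$, $\mathcal R\Delta_2^*$ is the algebra of regular languages over $\Delta_2$, and $\rho$ the least $\mathcal R$-congruence containing $bd=pq=1$, $bq=pd=0$. $K\otimes_{\mathcal R}C_2'$ is the tensor product of $\mathcal R$-dioids (universal $\mathcal R$-dioid with $\mathcal R$-morphisms from $K$ and $C_2'$ whose images commute elementwise); elements of $K,C_2'$ are identified with their images. $Z_{C_2'}K$ is the set of elements of $K\otimes_{\mathcal R}C_2'$ commuting with all elements of $C_2'$. Matrices carry matrix sum, product and standard matrix star; when $b,d,p,q$ are multiplied with $n\times n$ matrices they are identified with the corresponding diagonal matrices. *)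

theory Defs
  imports Main
begin

inductive_set mon_star :: "('a \<Rightarrow> 'a \<Rightarrow> 'a) \<Rightarrow> 'a \<Rightarrow> 'a set \<Rightarrow> 'a set"
  for mul :: "'a \<Rightarrow> 'a \<Rightarrow> 'a" and one :: 'a and A :: "'a set" where
  one: "one \<in> mon_star mul one A"
| step: "a \<in> A \<Longrightarrow> x \<in> mon_star mul one A \<Longrightarrow> mul a x \<in> mon_star mul one A"

definition set_prod :: "('a \<Rightarrow> 'a \<Rightarrow> 'a) \<Rightarrow> 'a set \<Rightarrow> 'a set \<Rightarrow> 'a set" where
  "set_prod mul A B = {mul a b | a b. a \<in> A \<and> b \<in> B}"

inductive_set ratset :: "('a \<Rightarrow> 'a \<Rightarrow> 'a) \<Rightarrow> 'a \<Rightarrow> 'a set set"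
  for mul :: "'a \<Rightarrow> 'a \<Rightarrow> 'a" and one :: 'a where
  fin: "finite A \<Longrightarrow> A \<in> ratset mul one"
| union: "A \<in> ratset mul one \<Longrightarrow> B \<in> ratset mul one \<Longrightarrow> A \<union> B \<in> ratset mul one"
| prod: "A \<in> ratset mul one \<Longrightarrow> B \<in> ratset mul one \<Longrightarrow> set_prod mul A B \<in> ratset mul one"
| star: "A \<in> ratset mul one \<Longrightarrow> mon_star mul one A \<in> ratset mul one"

class dioid = semiring_0 + monoid_mult +
  assumes add_idem: "x + x = x"

context dioid
begin

definition dle :: "'a \<Rightarrow> 'a \<Rightarrow> bool" where
  "dle x y \<longleftrightarrow> x + y = y"

definition is_dsup :: "'a set \<Rightarrow> 'a \<Rightarrow> bool" where
  "is_dsup A s \<longleftrightarrow> (\<forall>a\<in>A. dle a s) \<and> (\<forall>u. (\<forall>a\<in>A. dle a u) \<longrightarrow> dle s u)"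

definition dsup :: "'a set \<Rightarrow> 'a" where
  "dsup A = (THE s. is_dsup A s)"

end

class R_dioid = dioid +
  assumes rat_sup_ex: "(A :: 'a set) \<in> ratset (*) 1 \<Longrightarrow> \<exists>s. is_dsup A s"
  and rat_sup_mult: "(A :: 'a set) \<in> ratset (*) 1 \<Longrightarrow> B \<in> ratset (*) 1 \<Longrightarrow>
       dsup (set_prod (*) A B) = dsup A * dsup B"

definition dstar :: "'a::R_dioid \<Rightarrow> 'a" where
  "dstar x = dsup (range (\<lambda>k. x ^ k))"

definition R_morph :: "('a::R_dioid \<Rightarrow> 'b::R_dioid) \<Rightarrow> bool" where
  "R_morph f \<longleftrightarrow> f 0 = 0 \<and> f 1 = 1 \<and> (\<forall>x y. f (x + y) = f x + f y)
     \<and> (\<forall>x y. f (x * y) = f x * f y)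
     \<and> (\<forall>A \<in> ratset (*) 1. f (dsup A) = dsup (f ` A))"

datatype delta2 = B | P | D | Q

type_synonym lang = "delta2 list set"

definition lconc :: "lang \<Rightarrow> lang \<Rightarrow> lang" where
  "lconc A C = {u @ v | u v. u \<in> A \<and> v \<in> C}"

definition RegLang :: "lang set" where
  "RegLang = ratset (@) []"

definition RegSub :: "lang set set" where
  "RegSub = {\<A>. \<A> \<in> ratset lconc {[]} \<and> \<A> \<subseteq> RegLang}"

text \<open>Downward closure of a set of regular languages modulo theta (as a set of classes).\<close>
definition downcl :: "(lang \<times> lang) set \<Rightarrow> lang set \<Rightarrow> lang set set" where
  "downcl \<theta> \<A> = {\<theta> `` {y} | y. y \<in> RegLang \<and> (\<exists>a\<in>\<A>. (y \<union> a, a) \<in> \<theta>)}"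

definition R_cong :: "(lang \<times> lang) set \<Rightarrow> bool" where
  "R_cong \<theta> \<longleftrightarrow> equiv RegLang \<theta>
     \<and> (\<forall>A A' C C'. (A, A') \<in> \<theta> \<longrightarrow> (C, C') \<in> \<theta> \<longrightarrow>
           (A \<union> C, A' \<union> C') \<in> \<theta> \<and> (lconc A C, lconc A' C') \<in> \<theta>)
     \<and> (\<forall>\<A> \<B>. \<A> \<in> RegSub \<longrightarrow> \<B> \<in> RegSub \<longrightarrow> downcl \<theta> \<A> = downcl \<theta> \<B> \<longrightarrow>
           (\<Union>\<A>, \<Union>\<B>) \<in> \<theta>)"

definition C2_gens :: "(lang \<times> lang) set" where
  "C2_gens = {({[B, D]}, {[]}), ({[P, Q]}, {[]}), ({[B, Q]}, {}), ({[P, D]}, {})}"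

definition rho :: "(lang \<times> lang) set" where
  "rho = \<Inter> {\<theta>. R_cong \<theta> \<and> C2_gens \<subseteq> \<theta>}"

text \<open>An R-morphism from C2' = R Delta_2^* / rho into an R-dioid, represented by the
  induced R-morphism g on the regular languages whose kernel contains rho.\<close>
definition C2_morph :: "(lang \<Rightarrow> 'b::R_dioid) \<Rightarrow> bool" where
  "C2_morph g \<longleftrightarrow> g {} = 0 \<and> g {[]} = 1
     \<and> (\<forall>A\<in>RegLang. \<forall>C\<in>RegLang. g (A \<union> C) = g A + g C \<and> g (lconc A C) = g A * g C)
     \<and> (\<forall>\<A>\<in>RegSub. g (\<Union>\<A>) = dsup (g ` \<A>))
     \<and> (\<forall>A C. (A, C) \<in> rho \<longrightarrow> g A = g C)"

definition commuting :: "('k \<Rightarrow> 'a::times) \<Rightarrow> (lang \<Rightarrow> 'a) \<Rightarrow> bool" where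
  "commuting f g \<longleftrightarrow> (\<forall>x. \<forall>A\<in>RegLang. f x * g A = g A * f x)"

text \<open>iK, iC exhibit the R-dioid 'l as tensor product of K and C2' (universal property,
  tested against target R-dioids of type 'm).\<close>
definition is_R_tensor :: "'m::R_dioid itself \<Rightarrow> ('k::R_dioid \<Rightarrow> 'l::R_dioid) \<Rightarrow> (lang \<Rightarrow> 'l) \<Rightarrow> bool" where
  "is_R_tensor _ iK iC \<longleftrightarrow> R_morph iK \<and> C2_morph iC \<and> commuting iK iC
     \<and> (\<forall>(f :: 'k \<Rightarrow> 'm) g. R_morph f \<and> C2_morph g \<and> commuting f g \<longrightarrow>
          (\<exists>!h. R_morph h \<and> (\<forall>x. h (iK x) = f x) \<and> (\<forall>A\<in>RegLang. h (iC A) = g A)))"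

definition ZC :: "(lang \<Rightarrow> 'l::R_dioid) \<Rightarrow> 'l set" where
  "ZC iC = {x. \<forall>A\<in>RegLang. x * iC A = iC A * x}"

section \<open>n x n matrices (entries with indices < n are relevant)\<close>

type_synonym 'a mat = "nat \<Rightarrow> nat \<Rightarrow> 'a"

definition madd :: "'a::dioid mat \<Rightarrow> 'a mat \<Rightarrow> 'a mat" where
  "madd M N = (\<lambda>i j. M i j + N i j)"

definition mmul :: "nat \<Rightarrow> 'a::{times,comm_monoid_add} mat \<Rightarrow> 'a mat \<Rightarrow> 'a mat" where
  "mmul n M N = (\<lambda>i j. \<Sum>k<n. M i k * N k j)"

definition lscal :: "'a::times \<Rightarrow> 'a mat \<Rightarrow> 'a mat" where
  "lscal c M = (\<lambda>i j. c * M i j)"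

definition rscal :: "'a::times mat \<Rightarrow> 'a \<Rightarrow> 'a mat" where
  "rscal M c = (\<lambda>i j. M i j * c)"

definition mle :: "nat \<Rightarrow> 'a::dioid mat \<Rightarrow> 'a mat \<Rightarrow> bool" where
  "mle n M N \<longleftrightarrow> (\<forall>i<n. \<forall>j<n. dle (M i j) (N i j))"

text \<open>Standard (Conway) matrix star, splitting off the last row/column:
  for M = [[A, b], [c, e]], F = A + b e* c, and
  M* = [[F*, F* b e*], [e* c F*, e* + e* c F* b e*]].\<close>
fun mstar :: "nat \<Rightarrow> 'a::R_dioid mat \<Rightarrow> 'a mat" where
  "mstar 0 M = (\<lambda>i j. 0)"
| "mstar (Suc n) M =
    (let es = dstar (M n n);
         F = (\<lambda>i j. M i j + M i n * es * M n j);
         Fs = mstar n F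
     in (\<lambda>i j. if i < n \<and> j < n then Fs i j
              else if i < n \<and> j = n then (\<Sum>k<n. Fs i k * M k n) * es
              else if i = n \<and> j < n then es * (\<Sum>k<n. M n k * Fs k j)
              else if i = n \<and> j = n then es + es * (\<Sum>k<n. \<Sum>l<n. M n k * Fs k l * M l n) * es
              else 0))"

end

theory Submission
  imports Defs
begin


context dioid begin

lemma dle_refl[simp]: "dle x x" by (simp add: dle_def add_idem)
lemma dle_antisym: "dle x y \<Longrightarrow> dle y x \<Longrightarrow> x = y"
  by (metis dle_def add.commute)
lemma dle_trans: "dle x y \<Longrightarrow> dle y z \<Longrightarrow> dle x z"
  by (metis dle_def add.assoc)
lemma dle_zero[simp]: "dle 0 x" by (simp add: dle_def)
lemma dle_add_iff: "dle (x + y) z \<longleftrightarrow> dle x z \<and> dle y z"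
  unfolding dle_def by (metis add.assoc add.commute add_idem)
lemma dle_addL: "dle x (x + y)"
  unfolding dle_def by (metis add.assoc add_idem)
lemma dle_addR: "dle y (x + y)"
  unfolding dle_def by (metis add.assoc add.commute add_idem)
lemma dle_multL: "dle x y \<Longrightarrow> dle (c * x) (c * y)"
  unfolding dle_def by (metis distrib_left)
lemma dle_multR: "dle x y \<Longrightarrow> dle (x * c) (y * c)"
  unfolding dle_def by (metis distrib_right)
lemma dle_mult: "dle x y \<Longrightarrow> dle u v \<Longrightarrow> dle (x * u) (y * v)"
  by (meson dle_multL dle_multR dle_trans)

lemma is_dsup_unique: "is_dsup A s \<Longrightarrow> is_dsup A t \<Longrightarrow> s = t"
  unfolding is_dsup_def by (meson dle_antisym)
lemma is_dsup_dsup: "is_dsup A s \<Longrightarrow> dsup A = s"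
  unfolding dsup_def using is_dsup_unique by blast
end

context R_dioid begin

lemma rat_fin: "finite A \<Longrightarrow> A \<in> ratset (*) (1::'a)" by (rule ratset.fin)

lemma dsup_is: "A \<in> ratset (*) (1::'a) \<Longrightarrow> is_dsup A (dsup A)"
  using rat_sup_ex is_dsup_dsup by blast
lemma dsup_upper: "A \<in> ratset (*) (1::'a) \<Longrightarrow> a \<in> A \<Longrightarrow> dle a (dsup A)"
  using dsup_is is_dsup_def by blast
lemma dsup_least: "A \<in> ratset (*) (1::'a) \<Longrightarrow> (\<And>a. a \<in> A \<Longrightarrow> dle a u) \<Longrightarrow> dle (dsup A) u"
  using dsup_is is_dsup_def by blast
lemma dsup_mono: "A \<in> ratset (*) (1::'a) \<Longrightarrow> Y \<in> ratset (*) (1::'a) \<Longrightarrow> A \<subseteq> Y \<Longrightarrow> dle (dsup A) (dsup Y)"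
  by (meson dsup_least dsup_upper subsetD)
lemma dsup_eqI: "A \<in> ratset (*) (1::'a) \<Longrightarrow> (\<And>a. a \<in> A \<Longrightarrow> dle a s) \<Longrightarrow> (\<And>u. (\<And>a. a \<in> A \<Longrightarrow> dle a u) \<Longrightarrow> dle s u) \<Longrightarrow> dsup A = s"
  by (meson dle_antisym dsup_least dsup_upper)
lemma dsup_empty[simp]: "dsup {} = 0"
  by (rule is_dsup_dsup) (simp add: is_dsup_def)
lemma dsup_single[simp]: "dsup {a} = a"
  by (rule is_dsup_dsup) (simp add: is_dsup_def)
lemma dsup_union: "A \<in> ratset (*) (1::'a) \<Longrightarrow> Y \<in> ratset (*) (1::'a) \<Longrightarrow> dsup (A \<union> Y) = dsup A + dsup Y"
  apply (rule dsup_eqI)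
    apply (rule ratset.union, assumption+)
  apply (meson UnE dle_addL dle_addR dle_trans dsup_upper)
  by (simp add: dle_add_iff dsup_least)
lemma dsup_insert: "A \<in> ratset (*) (1::'a) \<Longrightarrow> dsup (insert a A) = a + dsup A"
  using dsup_union[of "{a}" A] by (simp add: rat_fin)
lemma dsup_prod: "A \<in> ratset (*) (1::'a) \<Longrightarrow> Y \<in> ratset (*) (1::'a) \<Longrightarrow> dsup (set_prod (*) A Y) = dsup A * dsup Y"
  by (rule rat_sup_mult)
lemma rat_prod: "A \<in> ratset (*) (1::'a) \<Longrightarrow> Y \<in> ratset (*) (1::'a) \<Longrightarrow> set_prod (*) A Y \<in> ratset (*) (1::'a)"
  by (rule ratset.prod)
lemma rat_union: "A \<in> ratset (*) (1::'a) \<Longrightarrow> Y \<in> ratset (*) (1::'a) \<Longrightarrow> A \<union> Y \<in> ratset (*) (1::'a)"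
  by (rule ratset.union)
lemma rat_star: "A \<in> ratset (*) (1::'a) \<Longrightarrow> mon_star (*) 1 A \<in> ratset (*) (1::'a)"
  by (rule ratset.star)

lemma rat_UN: "(\<And>k. k < (n::nat) \<Longrightarrow> A k \<in> ratset (*) (1::'a)) \<Longrightarrow> (\<Union>k\<in>{..<n}. A k) \<in> ratset (*) (1::'a)"
  by (induction n) (auto simp: lessThan_Suc rat_fin intro!: rat_union)
lemma dsup_UN: "(\<And>k. k < (n::nat) \<Longrightarrow> A k \<in> ratset (*) (1::'a)) \<Longrightarrow> dsup (\<Union>k\<in>{..<n}. A k) = (\<Sum>k<n. dsup (A k))"
proof (induction n)
  case 0 then show ?case by simp
next
  case (Suc n)
  have "(\<Union>k\<in>{..<Suc n}. A k) = A n \<union> (\<Union>k\<in>{..<n}. A k)" by (auto simp: lessThan_Suc)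
  then show ?case using Suc by (simp add: dsup_union rat_UN add.commute)
qed

fun pw :: "'a set \<Rightarrow> nat \<Rightarrow> 'a set" where
  "pw A 0 = {1}" | "pw A (Suc k) = set_prod (*) A (pw A k)"

lemma pw_rat: "A \<in> ratset (*) (1::'a) \<Longrightarrow> pw A k \<in> ratset (*) (1::'a)"
  by (induction k) (auto simp: rat_fin rat_prod)
lemma pw_dsup: "A \<in> ratset (*) (1::'a) \<Longrightarrow> dsup (pw A k) = dsup A ^ k"
  by (induction k) (auto simp: dsup_prod pw_rat)
lemma mon_star_pw: "mon_star (*) 1 A = (\<Union>k. pw A k)"
proof
  show "mon_star (*) 1 A \<subseteq> (\<Union>k. pw A k)"
  proof
    fix x assume "x \<in> mon_star (*) 1 A"
    then show "x \<in> (\<Union>k. pw A k)"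
    proof induction
      case one then show ?case by (metis UNIV_I UN_I pw.simps(1) singletonI)
    next
      case (step a x) then obtain k where k: "x \<in> pw A k" by auto
      have "a * x \<in> pw A (Suc k)" using step k by (auto simp: set_prod_def)
      then show ?case by blast
    qed
  qed
next
  show "(\<Union>k. pw A k) \<subseteq> mon_star (*) 1 A"
  proof -
    have "x \<in> pw A k \<Longrightarrow> x \<in> mon_star (*) 1 A" for x k
      by (induction k arbitrary: x) (auto simp: set_prod_def intro: mon_star.intros)
    then show ?thesis by auto
  qed
qed

lemma range_pow: "range (\<lambda>k. x ^ k) = mon_star (*) 1 {x}"
proof -
  have "pw {x} k = {x ^ k}" for k by (induction k) (auto simp: set_prod_def)
  then show ?thesis by (auto simp: mon_star_pw)
qed

end

lemma dsup_star: "(A::'a::R_dioid set) \<in> ratset (*) (1::'a) \<Longrightarrow> dsup (mon_star (*) 1 A) = dstar (dsup A)"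
proof -
  assume A: "A \<in> ratset (*) (1::'a)"
  let ?s = "dsup A"
  have R: "range (\<lambda>k. ?s ^ k) \<in> ratset (*) (1::'a)" using range_pow[of ?s] rat_star[OF rat_fin[of "{?s}"]] by simp
  have MS: "mon_star (*) 1 A \<in> ratset (*) (1::'a)" using A by (rule rat_star)
  show ?thesis unfolding dstar_def
  proof (rule dsup_eqI[OF MS])
    fix a assume "a \<in> mon_star (*) 1 A"
    then obtain k where "a \<in> pw A k" by (auto simp: mon_star_pw)
    then have "dle a (?s ^ k)" using dsup_upper[OF pw_rat[OF A]] pw_dsup[OF A] by metis
    then show "dle a (dsup (range (\<lambda>k. ?s ^ k)))"
      using dsup_upper[OF R, of "?s ^ k"] dle_trans by blast
  next
    fix u assume H: "\<And>a. a \<in> mon_star (*) 1 A \<Longrightarrow> dle a u"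
    show "dle (dsup (range (\<lambda>k. ?s ^ k))) u"
    proof (rule dsup_least[OF R])
      fix a assume "a \<in> range (\<lambda>k. ?s ^ k)"
      then obtain k where "a = ?s ^ k" by auto
      moreover have "dle (dsup (pw A k)) u"
        by (rule dsup_least[OF pw_rat[OF A]]) (use H mon_star_pw in blast)
      ultimately show "dle a u" using pw_dsup[OF A] by simp
    qed
  qed
qed



inductive pth :: "nat \<Rightarrow> ('a::monoid_mult) set mat \<Rightarrow> nat \<Rightarrow> nat \<Rightarrow> 'a \<Rightarrow> bool"
  for n :: nat and M :: "'a set mat" where
  nil: "i < n \<Longrightarrow> pth n M i i 1"
| cons: "i < n \<Longrightarrow> k < n \<Longrightarrow> m \<in> M i k \<Longrightarrow> pth n M k j w \<Longrightarrow> pth n M i j (m * w)"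

definition paths :: "nat \<Rightarrow> ('a::monoid_mult) set mat \<Rightarrow> nat \<Rightarrow> nat \<Rightarrow> 'a set" where
  "paths n M i j = {w. pth n M i j w}"

lemma sp_I: "a \<in> A \<Longrightarrow> b \<in> Y \<Longrightarrow> a * b \<in> set_prod (*) A Y"
  unfolding set_prod_def by blast
lemma sp_E: "x \<in> set_prod (*) A Y \<Longrightarrow> (\<And>a b. x = a * b \<Longrightarrow> a \<in> A \<Longrightarrow> b \<in> Y \<Longrightarrow> thesis) \<Longrightarrow> thesis"
  unfolding set_prod_def by blast

lemma pth_idx: "pth n M i j w \<Longrightarrow> i < n \<and> j < n"
  by (induction rule: pth.induct) auto

lemma pth_app: "pth n M i k u \<Longrightarrow> pth n M k j w \<Longrightarrow> pth n M i j (u * w)"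
  by (induction rule: pth.induct) (auto simp: mult.assoc intro: pth.cons)

lemma pth_single: "i < n \<Longrightarrow> k < n \<Longrightarrow> m \<in> M i k \<Longrightarrow> pth n M i k m"
  using pth.cons[OF _ _ _ pth.nil, of i n k m M] by simp

definition FF :: "nat \<Rightarrow> ('a::monoid_mult) set mat \<Rightarrow> 'a set mat" where
  "FF n M = (\<lambda>i j. M i j \<union> set_prod (*) (set_prod (*) (M i n) (mon_star (*) 1 (M n n))) (M n j))"

abbreviation EE :: "nat \<Rightarrow> ('a::monoid_mult) set mat \<Rightarrow> 'a set" where
  "EE n M \<equiv> mon_star (*) 1 (M n n)"

definition S1 where "S1 n M i = set_prod (*) (\<Union>k\<in>{..<n}. set_prod (*) (paths n (FF n M) i k) (M k n)) (EE n M)"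
definition S2 where "S2 n M j = set_prod (*) (EE n M) (\<Union>k\<in>{..<n}. set_prod (*) (M n k) (paths n (FF n M) k j))"
definition S3 where "S3 n M = EE n M \<union> set_prod (*) (set_prod (*) (EE n M)
    (\<Union>k\<in>{..<n}. \<Union>l\<in>{..<n}. set_prod (*) (set_prod (*) (M n k) (paths n (FF n M) k l)) (M l n))) (EE n M)"

lemma EE_mult: "m \<in> M n n \<Longrightarrow> e \<in> EE n M \<Longrightarrow> m * e \<in> EE n M"
  by (rule mon_star.step)

lemma decomp:
  assumes "pth (Suc n) M i j w"
  shows "(i < n \<and> j < n \<longrightarrow> pth n (FF n M) i j w) \<and>
         (i < n \<and> j = n \<longrightarrow> w \<in> S1 n M i) \<and>
         (i = n \<and> j < n \<longrightarrow> w \<in> S2 n M j) \<and>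
         (i = n \<and> j = n \<longrightarrow> w \<in> S3 n M)"
  using assms
proof (induction rule: pth.induct)
  case (nil i)
  then show ?case
    by (auto simp: S3_def intro: pth.nil mon_star.one)
next
  case (cons i k m j w)
  have iL: "i < n \<or> i = n" and kL: "k < n \<or> k = n" and jL: "j < n \<or> j = n"
    using cons pth_idx[OF cons.hyps(4)] by auto
  show ?case
  proof (intro conjI impI)
    assume ij: "i < n \<and> j < n"
    show "pth n (FF n M) i j (m * w)"
    proof (cases "k < n")
      case True
      then have "m \<in> FF n M i k" using cons by (auto simp: FF_def)
      then show ?thesis using cons True ij by (auto intro: pth.cons)
    next
      case False then have "k = n" using kL by auto
      then have "w \<in> S2 n M j" using cons ij by auto
      then obtain e m' k' u where w: "w = e * (m' * u)" and e: "e \<in> EE n M" and k': "k' < n"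
        and m': "m' \<in> M n k'" and u: "pth n (FF n M) k' j u"
        unfolding S2_def paths_def by (auto elim!: sp_E)
      have "m * e * m' \<in> FF n M i k'" unfolding FF_def using cons \<open>k = n\<close> e m'
        by (auto intro!: sp_I)
      then have "pth n (FF n M) i j (m * e * m' * u)" using ij k' u by (auto intro: pth.cons)
      then show ?thesis by (simp add: w mult.assoc)
    qed
  next
    assume ij: "i < n \<and> j = n"
    show "m * w \<in> S1 n M i"
    proof (cases "k < n")
      case True
      then have "w \<in> S1 n M k" using cons ij by auto
      then obtain u k' m' e where w: "w = u * m' * e" and e: "e \<in> EE n M" and k': "k' < n"
        and m': "m' \<in> M k' n" and u: "pth n (FF n M) k k' u"
        unfolding S1_def paths_def by (auto elim!: sp_E)
      have "m \<in> FF n M i k" using cons by (auto simp: FF_def)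
      then have "pth n (FF n M) i k' (m * u)" using ij True u by (auto intro: pth.cons)
      then have "(m * u) * m' * e \<in> S1 n M i" unfolding S1_def paths_def using k' m' e
        by (intro sp_I UN_I[of k']) auto
      then show ?thesis by (simp add: w mult.assoc)
    next
      case False then have kn: "k = n" using kL by auto
      then have "w \<in> S3 n M" using cons ij by auto
      then consider (a) "w \<in> EE n M" | (b) e k1 l m1 u m2 e' where "w = e * (m1 * u * m2) * e'"
        "e \<in> EE n M" "e' \<in> EE n M" "k1 < n" "l < n" "m1 \<in> M n k1" "m2 \<in> M l n"
        "pth n (FF n M) k1 l u"
        unfolding S3_def paths_def by (auto elim!: sp_E)
      then show ?thesis
      proof cases
        case a
        have "1 * m * w \<in> S1 n M i" unfolding S1_def paths_def using ij a cons kn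
          by (intro sp_I UN_I[of i]) (auto intro: pth.nil)
        then show ?thesis by simp
      next
        case b
        have "m * e * m1 \<in> FF n M i k1" unfolding FF_def using cons kn b
          by (auto intro!: sp_I)
        then have "pth n (FF n M) i l (m * e * m1 * u)" using ij b by (auto intro: pth.cons)
        then have "m * e * m1 * u * m2 * e' \<in> S1 n M i" unfolding S1_def paths_def using b
          by (intro sp_I UN_I[of l]) auto
        then show ?thesis by (simp add: b mult.assoc)
      qed
    qed
  next
    assume ij: "i = n \<and> j < n"
    show "m * w \<in> S2 n M j"
    proof (cases "k < n")
      case True
      then have "pth n (FF n M) k j w" using cons ij by auto
      then have "1 * (m * w) \<in> S2 n M j" unfolding S2_def paths_def using True cons ij
        by (intro sp_I UN_I[of k]) (auto intro: mon_star.one)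
      then show ?thesis by simp
    next
      case False then have kn: "k = n" using kL by auto
      then have "w \<in> S2 n M j" using cons ij by auto
      then obtain e r where w: "w = e * r" and e: "e \<in> EE n M"
        and r: "r \<in> (\<Union>k\<in>{..<n}. set_prod (*) (M n k) (paths n (FF n M) k j))"
        unfolding S2_def by (elim sp_E) blast
      have "m * e \<in> EE n M" using cons kn ij e by (auto intro: EE_mult)
      then have "(m * e) * r \<in> S2 n M j" unfolding S2_def using r by (rule sp_I)
      then show ?thesis by (simp add: w mult.assoc)
    qed
  next
    assume ij: "i = n \<and> j = n"
    show "m * w \<in> S3 n M"
    proof (cases "k < n")
      case True
      then have "w \<in> S1 n M k" using cons ij by auto
      then obtain u k' m' e where w: "w = u * m' * e" and e: "e \<in> EE n M" and k': "k' < n"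
        and m': "m' \<in> M k' n" and u: "pth n (FF n M) k k' u"
        unfolding S1_def paths_def by (auto elim!: sp_E)
      have "1 * (m * u * m') * e \<in> S3 n M" unfolding S3_def paths_def
        using e k' m' u True cons ij
        by (intro UnI2 sp_I UN_I[of k] UN_I[of k']) (auto intro: mon_star.one)
      then show ?thesis by (simp add: w mult.assoc)
    next
      case False then have kn: "k = n" using kL by auto
      then have "w \<in> S3 n M" using cons ij by auto
      then consider (a) "w \<in> EE n M" | (b) e r e' where "w = e * r * e'"
        "e \<in> EE n M" "e' \<in> EE n M" "r \<in> (\<Union>k\<in>{..<n}. \<Union>l\<in>{..<n}. set_prod (*) (set_prod (*) (M n k) (paths n (FF n M) k l)) (M l n))"
        unfolding S3_def by (elim UnE sp_E) blast+
      then show ?thesis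
      proof cases
        case a then show ?thesis unfolding S3_def using cons kn ij by (auto intro: EE_mult)
      next
        case b
        have "m * e \<in> EE n M" using cons kn ij b by (auto intro: EE_mult)
        then have "(m * e) * r * e' \<in> S3 n M" unfolding S3_def using b
          by (intro UnI2 sp_I) auto
        then show ?thesis by (simp add: b mult.assoc)
      qed
    qed
  qed
qed


lemma star_pth: "e \<in> EE n M \<Longrightarrow> pth (Suc n) M n n e"
  by (induction rule: mon_star.induct) (auto intro: pth.nil pth.cons)

lemma FF_pth: "pth n (FF n M) i j w \<Longrightarrow> pth (Suc n) M i j w"
proof (induction rule: pth.induct)
  case (nil i) then show ?case by (auto intro: pth.nil)
next
  case (cons i k m j w)
  from cons.hyps(3) show ?case unfolding FF_def
  proof (elim UnE sp_E)
    assume "m \<in> M i k" then show ?thesis using cons by (intro pth.cons) auto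
  next
    fix a b m1 e
    assume h: "m = a * b" "a = m1 * e" "m1 \<in> M i n" "e \<in> EE n M" "b \<in> M n k"
    have "pth (Suc n) M i n m1" using h cons by (auto intro: pth_single)
    moreover have "pth (Suc n) M n n e" using h by (auto intro: star_pth)
    moreover have "pth (Suc n) M n k b" using h cons by (auto intro: pth_single)
    ultimately have "pth (Suc n) M i k m" using h by (metis pth_app)
    then show ?thesis using cons pth_app by blast
  qed
qed

lemma S1_sub: "x \<in> S1 n M i \<Longrightarrow> pth (Suc n) M i n x"
  unfolding S1_def paths_def
proof (elim sp_E UN_E)
  fix a b k u m assume h: "x = a * b" "b \<in> EE n M" "k \<in> {..<n}" "a = u * m"
    "u \<in> Collect (pth n (FF n M) i k)" "m \<in> M k n"
  then have "pth (Suc n) M i k u" by (auto intro: FF_pth)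
  moreover have "pth (Suc n) M k n m" using h by (intro pth_single) auto
  moreover have "pth (Suc n) M n n b" using h by (intro star_pth)
  ultimately show ?thesis using h pth_app by metis
qed

lemma S2_sub: "x \<in> S2 n M j \<Longrightarrow> pth (Suc n) M n j x"
  unfolding S2_def paths_def
proof (elim sp_E UN_E)
  fix a b k u m assume h: "x = a * b" "a \<in> EE n M" "k \<in> {..<n}" "b = m * u"
    "u \<in> Collect (pth n (FF n M) k j)" "m \<in> M n k"
  then have "pth (Suc n) M k j u" by (auto intro: FF_pth)
  moreover have "pth (Suc n) M n k m" using h by (intro pth_single) auto
  moreover have "pth (Suc n) M n n a" using h by (intro star_pth)
  ultimately show ?thesis using h pth_app by metis
qed

lemma S3_sub: "x \<in> S3 n M \<Longrightarrow> pth (Suc n) M n n x"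
  unfolding S3_def paths_def
proof (elim UnE sp_E UN_E)
  assume "x \<in> EE n M" then show ?thesis by (rule star_pth)
next
  fix a b e r k l c m2 m1 u assume h: "x = a * b" "b \<in> EE n M" "a = e * r" "e \<in> EE n M"
    "k \<in> {..<n}" "l \<in> {..<n}" "r = c * m2" "c = m1 * u" "u \<in> Collect (pth n (FF n M) k l)"
    "m1 \<in> M n k" "m2 \<in> M l n"
  then have "pth (Suc n) M k l u" by (auto intro: FF_pth)
  moreover have "pth (Suc n) M n k m1" using h by (intro pth_single) auto
  moreover have "pth (Suc n) M l n m2" using h by (intro pth_single) auto
  moreover have "pth (Suc n) M n n e" using h by (intro star_pth)
  moreover have "pth (Suc n) M n n b" using h by (intro star_pth)
  ultimately show ?thesis using h pth_app by metis
qed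

lemma paths_Suc_ll: "i < n \<Longrightarrow> j < n \<Longrightarrow> paths (Suc n) M i j = paths n (FF n M) i j"
  unfolding paths_def using decomp FF_pth by blast
lemma paths_Suc_ln: "i < n \<Longrightarrow> paths (Suc n) M i n = S1 n M i"
  unfolding paths_def using decomp S1_sub by blast
lemma paths_Suc_nl: "j < n \<Longrightarrow> paths (Suc n) M n j = S2 n M j"
  unfolding paths_def using decomp S2_sub by blast
lemma paths_Suc_nn: "paths (Suc n) M n n = S3 n M"
  unfolding paths_def using decomp S3_sub by blast



lemma bridge:
  fixes M :: "'a::R_dioid set mat" and A :: "'a mat"
  assumes "\<forall>i j. M i j \<in> ratset (*) 1" "\<forall>i j. dsup (M i j) = A i j" "i < n" "j < n"
  shows "paths n M i j \<in> ratset (*) 1 \<and> dsup (paths n M i j) = mstar n A i j"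
  using assms
proof (induction n arbitrary: M A i j)
  case 0 then show ?case by simp
next
  case (Suc n)
  define es where "es = dstar (A n n)"
  define F where "F = (\<lambda>i j. A i j + A i n * es * A n j)"
  define Fs where "Fs = mstar n F"
  have R: "M i j \<in> ratset (*) 1" for i j using Suc by auto
  have DS: "dsup (M i j) = A i j" for i j using Suc by auto
  have RE: "EE n M \<in> ratset (*) 1" using R by (rule rat_star)
  have DE: "dsup (EE n M) = es" unfolding es_def using dsup_star[OF R] DS by simp
  have RF: "FF n M i j \<in> ratset (*) 1" for i j
    unfolding FF_def by (intro rat_union rat_prod R RE)
  have DF: "dsup (FF n M i j) = F i j" for i j
    unfolding FF_def F_def by (simp add: dsup_union dsup_prod rat_prod R RE DE DS)
  have IH: "paths n (FF n M) k l \<in> ratset (*) 1 \<and> dsup (paths n (FF n M) k l) = Fs k l"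
    if "k < n" "l < n" for k l
    using Suc.IH[of "FF n M" F k l] RF DF that Fs_def by auto
  have mst: "mstar (Suc n) A i j =
     (if i < n \<and> j < n then Fs i j
              else if i < n \<and> j = n then (\<Sum>k<n. Fs i k * A k n) * es
              else if i = n \<and> j < n then es * (\<Sum>k<n. A n k * Fs k j)
              else if i = n \<and> j = n then es + es * (\<Sum>k<n. \<Sum>l<n. A n k * Fs k l * A l n) * es
              else 0)" for i j
    by (simp add: Let_def es_def F_def Fs_def)
  have ij: "i < n \<or> i = n" "j < n \<or> j = n" using Suc by auto
  show ?case
  proof (cases "i < n")
    case True note i = True
    show ?thesis
    proof (cases "j < n")
      case True
      have P: "paths (Suc n) M i j = paths n (FF n M) i j" by (rule paths_Suc_ll[OF i True])
      show ?thesis unfolding mst P using IH[OF i True] i True by simp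
    next
      case False then have jn: "j = n" using ij by auto
      have R1: "(\<Union>k\<in>{..<n}. set_prod (*) (paths n (FF n M) i k) (M k n)) \<in> ratset (*) 1"
        by (intro rat_UN rat_prod) (auto simp: IH i R)
      have "dsup (S1 n M i) = (\<Sum>k<n. Fs i k * A k n) * es"
        unfolding S1_def using R1 RE DE
        by (simp add: dsup_prod dsup_UN rat_prod IH i R DS)
      moreover have "S1 n M i \<in> ratset (*) 1" unfolding S1_def using R1 RE by (rule rat_prod)
      moreover have P: "paths (Suc n) M i j = S1 n M i" using paths_Suc_ln[OF i] jn by simp
      ultimately show ?thesis unfolding mst P using i jn by simp
    qed
  next
    case False then have iN: "i = n" using ij by auto
    show ?thesis
    proof (cases "j < n")
      case True note j = True
      have R1: "(\<Union>k\<in>{..<n}. set_prod (*) (M n k) (paths n (FF n M) k j)) \<in> ratset (*) 1"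
        by (intro rat_UN rat_prod) (auto simp: IH j R)
      have "dsup (S2 n M j) = es * (\<Sum>k<n. A n k * Fs k j)"
        unfolding S2_def using R1 RE DE
        by (simp add: dsup_prod dsup_UN rat_prod IH j R DS)
      moreover have "S2 n M j \<in> ratset (*) 1" unfolding S2_def using RE R1 by (rule rat_prod)
      moreover have P: "paths (Suc n) M i j = S2 n M j" using paths_Suc_nl[OF j] iN by simp
      ultimately show ?thesis unfolding mst P using j iN by simp
    next
      case False then have jn: "j = n" using ij by auto
      have R0: "set_prod (*) (set_prod (*) (M n k) (paths n (FF n M) k l)) (M l n) \<in> ratset (*) 1"
        if "k < n" "l < n" for k l using that by (intro rat_prod) (auto simp: IH R)
      have R1: "(\<Union>k\<in>{..<n}. \<Union>l\<in>{..<n}. set_prod (*) (set_prod (*) (M n k) (paths n (FF n M) k l)) (M l n)) \<in> ratset (*) 1"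
        by (intro rat_UN R0) auto
      have D1: "dsup (\<Union>k\<in>{..<n}. \<Union>l\<in>{..<n}. set_prod (*) (set_prod (*) (M n k) (paths n (FF n M) k l)) (M l n))
          = (\<Sum>k<n. \<Sum>l<n. A n k * Fs k l * A l n)"
        by (simp add: dsup_UN rat_UN R0 dsup_prod rat_prod IH R DS)
      have "dsup (S3 n M) = es + es * (\<Sum>k<n. \<Sum>l<n. A n k * Fs k l * A l n) * es"
        unfolding S3_def using R1 RE DE D1
        by (simp add: dsup_prod dsup_union rat_prod)
      moreover have "S3 n M \<in> ratset (*) 1" unfolding S3_def using R1 RE by (intro rat_union rat_prod)
      moreover have P: "paths (Suc n) M i j = S3 n M" using paths_Suc_nn iN jn by simp
      ultimately show ?thesis unfolding mst P using iN jn by simp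
    qed
  qed
qed



locale setting =
  fixes n :: nat and U X V :: "'a::R_dioid mat" and b p d q :: 'a and Zs :: "'a set"
  assumes Z0: "0 \<in> Zs" and Z1: "1 \<in> Zs" and Zmult: "x \<in> Zs \<Longrightarrow> y \<in> Zs \<Longrightarrow> x * y \<in> Zs"
    and Zb: "x \<in> Zs \<Longrightarrow> x * b = b * x" and Zp: "x \<in> Zs \<Longrightarrow> x * p = p * x"
    and Zd: "x \<in> Zs \<Longrightarrow> x * d = d * x" and Zq: "x \<in> Zs \<Longrightarrow> x * q = q * x"
    and XZ: "i < n \<Longrightarrow> j < n \<Longrightarrow> X i j \<in> Zs"
    and Uv: "i < n \<Longrightarrow> j < n \<Longrightarrow> U i j \<in> {0, b, p}"
    and Vv: "i < n \<Longrightarrow> j < n \<Longrightarrow> V i j \<in> {0, d, q}"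
    and bd: "b * d = 1" and pq: "p * q = 1" and bq: "b * q = 0" and pd: "p * d = 0"
begin

definition Ms :: "'a set mat" where "Ms i j = {U i j * p, X i j, q * V i j}"

inductive Bal :: "nat \<Rightarrow> nat \<Rightarrow> 'a \<Rightarrow> bool" where
  B1: "i < n \<Longrightarrow> Bal i i 1"
| BX: "i < n \<Longrightarrow> k < n \<Longrightarrow> Bal k j x \<Longrightarrow> Bal i j (X i k * x)"
| BU: "i < n \<Longrightarrow> k < n \<Longrightarrow> l < n \<Longrightarrow> m < n \<Longrightarrow> Bal k l u \<Longrightarrow> Bal m j x \<Longrightarrow>
       Bal i j (U i k * p * u * (q * V l m) * x)"

inductive Op :: "nat \<Rightarrow> nat \<Rightarrow> 'a \<Rightarrow> bool" where
  O1: "Bal i j x \<Longrightarrow> Op i j x"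
| O2: "Bal i k x \<Longrightarrow> k < n \<Longrightarrow> l < n \<Longrightarrow> Op l j w \<Longrightarrow> Op i j (x * (U k l * p) * w)"

inductive Dec :: "nat \<Rightarrow> nat \<Rightarrow> 'a \<Rightarrow> bool" where
  D1: "Op i j w \<Longrightarrow> Dec i j w"
| D2: "Bal i k x \<Longrightarrow> k < n \<Longrightarrow> l < n \<Longrightarrow> Dec l j w \<Longrightarrow> Dec i j (x * (q * V k l) * w)"

lemma UV: "i < n \<Longrightarrow> k < n \<Longrightarrow> l < n \<Longrightarrow> m < n \<Longrightarrow> U i k * V l m \<in> {0, 1}"
proof -
  assume h: "i < n" "k < n" "l < n" "m < n"
  have "U i k = 0 \<or> U i k = b \<or> U i k = p" "V l m = 0 \<or> V l m = d \<or> V l m = q"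
    using Uv[OF h(1,2)] Vv[OF h(3,4)] by auto
  then show ?thesis by (elim disjE) (simp_all add: bd pq bq pd)
qed

lemma ZU: "x \<in> Zs \<Longrightarrow> i < n \<Longrightarrow> k < n \<Longrightarrow> x * U i k = U i k * x"
  using Uv[of i k] Zb Zp by auto
lemma ZV: "x \<in> Zs \<Longrightarrow> i < n \<Longrightarrow> k < n \<Longrightarrow> x * V i k = V i k * x"
  using Vv[of i k] Zd Zq by auto

lemma bal_val: "u \<in> Zs \<Longrightarrow> i < n \<Longrightarrow> k < n \<Longrightarrow> l < n \<Longrightarrow> m < n \<Longrightarrow>
    U i k * p * u * (q * V l m) * x = u * (U i k * V l m) * x"
proof -
  assume h: "u \<in> Zs" "i < n" "k < n" "l < n" "m < n"
  have "U i k * p * u * (q * V l m) * x = U i k * (p * u) * q * V l m * x" by (simp add: mult.assoc)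
  also have "\<dots> = (U i k * u) * (p * q) * V l m * x" using Zp[OF h(1)] by (metis mult.assoc)
  also have "\<dots> = u * (U i k * V l m) * x" using ZU[OF h(1) h(2) h(3)] by (metis pq mult.assoc mult_1_right)
  finally show ?thesis .
qed

lemma bal_idx: "Bal i j x \<Longrightarrow> i < n \<and> j < n"
  by (induction rule: Bal.induct) auto

lemma bal_Z: "Bal i j x \<Longrightarrow> x \<in> Zs"
proof (induction rule: Bal.induct)
  case (B1 i) then show ?case by (simp add: Z1)
next
  case (BX i k j x) then show ?case by (intro Zmult XZ)
next
  case (BU i k l m u j x)
  have "U i k * V l m \<in> Zs" using UV[OF BU(1-4)] Z0 Z1 by auto
  then show ?case using BU bal_val by (auto intro!: Zmult)
qed

lemma bal_app: "Bal a c u \<Longrightarrow> Bal c e v \<Longrightarrow> Bal a e (u * v)"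
proof (induction arbitrary: v rule: Bal.induct)
  case (B1 i) then show ?case by simp
next
  case (BX i k j x) then show ?case by (auto simp: mult.assoc intro: Bal.BX)
next
  case (BU i k l m u j x)
  then have "Bal i e (U i k * p * u * (q * V l m) * (x * v))"
    by (intro Bal.BU) auto
  then show ?case by (simp add: mult.assoc)
qed

lemma bal_op: assumes "Bal i k u" "Op k j w" shows "Op i j (u * w)"
  using assms(2)
proof cases
  case O1 then show ?thesis using assms by (auto intro: Op.O1 bal_app)
next
  case (O2 k' x l w')
  then have "Op i j (u * x * (U k' l * p) * w')" using assms by (intro Op.O2 bal_app) auto
  then show ?thesis using O2 by (simp add: mult.assoc)
qed

lemma bal_dec: assumes "Bal i k u" "Dec k j w" shows "Dec i j (u * w)"
  using assms(2)
proof cases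
  case D1 then show ?thesis using assms by (auto intro: Dec.D1 bal_op)
next
  case (D2 k' x l w')
  then have "Dec i j (u * x * (q * V k' l) * w')" using assms by (intro Dec.D2 bal_app) auto
  then show ?thesis using D2 by (simp add: mult.assoc)
qed

lemma path_dec: "pth n Ms i j w \<Longrightarrow> Dec i j w"
proof (induction rule: pth.induct)
  case (nil i) then show ?case by (intro Dec.D1 Op.O1 Bal.B1)
next
  case (cons i k m j w)
  from cons(3) consider "m = U i k * p" | "m = X i k" | "m = q * V i k" unfolding Ms_def by auto
  then show ?case
  proof cases
    case 1
    from cons(5) show ?thesis
    proof (cases rule: Dec.cases)
      case D1
      then have "Op i j (1 * (U i k * p) * w)" using cons by (intro Op.O2 Bal.B1) auto
      then show ?thesis using 1 by (auto intro: Dec.D1)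
    next
      case (D2 k' x l w')
      then have "Bal i l (U i k * p * x * (q * V k' l) * 1)" using cons
        by (intro Bal.BU Bal.B1) auto
      then have "Dec i j (U i k * p * x * (q * V k' l) * 1 * w')" using D2 by (intro bal_dec)
      then show ?thesis using 1 D2 by (simp add: mult.assoc)
    qed
  next
    case 2
    have "Bal i k (X i k * 1)" using cons by (intro Bal.BX Bal.B1) auto
    then show ?thesis using 2 cons bal_dec by fastforce
  next
    case 3
    have "Dec i j (1 * (q * V i k) * w)" using cons by (intro Dec.D2 Bal.B1) auto
    then show ?thesis using 3 by simp
  qed
qed

lemma op_pd: "Op i j w \<Longrightarrow> p * w * d = 0"
proof (induction rule: Op.induct)
  case (O1 i j x)
  then have "x \<in> Zs" by (rule bal_Z)
  then have "p * x * d = x * (p * d)" using Zp by (metis mult.assoc)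
  then show ?case by (simp add: pd)
next
  case (O2 i k x l j w)
  then have "x \<in> Zs" by (auto intro: bal_Z)
  then have "p * (x * (U k l * p) * w) * d = x * p * U k l * (p * w * d)" using Zp by (metis mult.assoc)
  then show ?case using O2 by simp
qed

lemma dec_cases: assumes "Dec i j w" shows "Bal i j w \<or> b * w * d = 0"
  using assms
proof cases
  case D1
  from D1 show ?thesis
  proof (cases rule: Op.cases)
    case O1 then show ?thesis by simp
  next
    case (O2 k x l w')
    then have "x \<in> Zs" by (auto intro: bal_Z)
    then have "b * w * d = x * b * U k l * (p * w' * d)" using Zb O2 by (metis mult.assoc)
    then show ?thesis using op_pd[OF O2(5)] by simp
  qed
next
  case (D2 k x l w')
  then have "x \<in> Zs" by (auto intro: bal_Z)
  then have "b * (x * (q * V k l) * w') * d = x * (b * q) * V k l * w' * d" using Zb by (metis mult.assoc)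
  then show ?thesis using D2 by (simp add: bq)
qed

lemma bal_bd: "Bal i j x \<Longrightarrow> b * x * d = x"
proof -
  assume "Bal i j x" then have "x \<in> Zs" by (rule bal_Z)
  then have "b * x * d = x * (b * d)" using Zb by (metis mult.assoc)
  then show ?thesis by (simp add: bd)
qed

lemma bal_pth: "Bal i j x \<Longrightarrow> pth n Ms i j x"
proof (induction rule: Bal.induct)
  case (B1 i) then show ?case by (rule pth.nil)
next
  case (BX i k j x) then show ?case by (intro pth.cons) (auto simp: Ms_def)
next
  case (BU i k l m u j x)
  have "pth n Ms i k (U i k * p)" using BU by (intro pth_single) (auto simp: Ms_def)
  moreover have "pth n Ms l m (q * V l m)" using BU by (intro pth_single) (auto simp: Ms_def)
  ultimately show ?case using BU pth_app by metis
qed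

end


lemma paths_rat:
  fixes M :: "'a::R_dioid set mat"
  assumes "\<forall>i j. M i j \<in> ratset (*) 1" "i < n" "j < n"
  shows "paths n M i j \<in> ratset (*) 1"
  using bridge[of M "\<lambda>i j. dsup (M i j)" i n j] assms by auto

lemma gen_step:
  fixes M :: "'a::R_dioid set mat"
  assumes R: "\<forall>i j. M i j \<in> ratset (*) 1" and a: "a \<in> M i k" and idx: "i < n" "k < n" "j < n"
  shows "dle (a * dsup (paths n M k j)) (dsup (paths n M i j))"
proof -
  have Rk: "paths n M k j \<in> ratset (*) 1" "paths n M i j \<in> ratset (*) 1"
    using paths_rat[OF R] idx by auto
  have "a * dsup (paths n M k j) = dsup (set_prod (*) {a} (paths n M k j))"
    using dsup_prod[OF rat_fin[of "{a}"] Rk(1)] by simp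
  moreover have "set_prod (*) {a} (paths n M k j) \<subseteq> paths n M i j"
    unfolding set_prod_def paths_def using a idx by (auto intro: pth.cons)
  ultimately show ?thesis
    by (metis Rk rat_fin rat_prod dsup_mono finite.emptyI finite.insertI)
qed

lemma dsup_comm:
  fixes T :: "'a::R_dioid set"
  assumes R: "T \<in> ratset (*) 1" and C: "\<And>x. x \<in> T \<Longrightarrow> x * c = c * x"
  shows "dsup T * c = c * dsup T"
proof -
  have "set_prod (*) T {c} = set_prod (*) {c} T" unfolding set_prod_def by (auto; metis C)
  then show ?thesis
    using dsup_prod[OF R rat_fin[of "{c}"]] dsup_prod[OF rat_fin[of "{c}"] R] by simp
qed

context setting begin

definition Mm :: "'a mat" where "Mm = madd (madd (rscal U p) X) (lscal q V)"
definition Nm :: "'a mat" where "Nm = lscal b (rscal (mstar n Mm) d)"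
definition NS :: "nat \<Rightarrow> nat \<Rightarrow> 'a set" where
  "NS i j = set_prod (*) (set_prod (*) {b} (paths n Ms i j)) {d}"

lemma Ms_rat: "\<forall>i j. Ms i j \<in> ratset (*) 1" unfolding Ms_def by (auto intro: rat_fin)
lemma Ms_dsup: "dsup (Ms i j) = Mm i j"
  unfolding Ms_def Mm_def madd_def rscal_def lscal_def
  by (simp add: dsup_insert rat_fin add.assoc)

lemma P_rat: "i < n \<Longrightarrow> j < n \<Longrightarrow> paths n Ms i j \<in> ratset (*) 1"
  using paths_rat[OF Ms_rat] by auto
lemma P_dsup: "i < n \<Longrightarrow> j < n \<Longrightarrow> dsup (paths n Ms i j) = mstar n Mm i j"
  using bridge[of Ms Mm i n j] Ms_rat Ms_dsup by auto

lemma NS_rat: "i < n \<Longrightarrow> j < n \<Longrightarrow> NS i j \<in> ratset (*) 1"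
  unfolding NS_def by (intro rat_prod rat_fin P_rat) auto
lemma NS_dsup: "i < n \<Longrightarrow> j < n \<Longrightarrow> dsup (NS i j) = Nm i j"
  unfolding NS_def Nm_def lscal_def rscal_def
  by (simp add: dsup_prod rat_prod rat_fin P_rat P_dsup mult.assoc)

lemma NS_elem: "x \<in> NS i j \<Longrightarrow> x = 0 \<or> Bal i j x"
proof -
  assume "x \<in> NS i j"
  then obtain w where x: "x = b * w * d" and w: "pth n Ms i j w"
    unfolding NS_def set_prod_def paths_def by auto
  from dec_cases[OF path_dec[OF w]] show ?thesis
    using bal_bd x by auto
qed

lemma bal_NS: "Bal i j x \<Longrightarrow> x \<in> NS i j"
proof -
  assume h: "Bal i j x"
  have "b * x * d \<in> NS i j" unfolding NS_def paths_def using bal_pth[OF h]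
    by (intro sp_I) auto
  then show ?thesis using bal_bd[OF h] by simp
qed

lemma NS_Z: "x \<in> NS i j \<Longrightarrow> x \<in> Zs"
  using NS_elem bal_Z Z0 by blast

lemma bal_le_N: "Bal i j x \<Longrightarrow> dle x (Nm i j)"
  using bal_NS dsup_upper NS_rat NS_dsup bal_idx by metis

lemma U_comm_val: "u \<in> Zs \<Longrightarrow> i < n \<Longrightarrow> k < n \<Longrightarrow> l < n \<Longrightarrow> m < n \<Longrightarrow>
   U i k * u * V l m * x = U i k * p * u * (q * V l m) * x"
  using bal_val ZU by (metis mult.assoc)

definition Zm :: "'a mat" where "Zm = madd (mmul n (mmul n U Nm) V) X"
definition Zset :: "'a set mat" where
  "Zset i j = (\<Union>l\<in>{..<n}. set_prod (*) (\<Union>k\<in>{..<n}. set_prod (*) {U i k} (NS k l)) {V l j}) \<union> {X i j}"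

lemma Zin_rat: "l < n \<Longrightarrow> (\<Union>k\<in>{..<n}. set_prod (*) {U i k} (NS k l)) \<in> ratset (*) 1"
  by (intro rat_UN rat_prod rat_fin NS_rat) auto
lemma Zout_rat: "(\<Union>l\<in>{..<n}. set_prod (*) (\<Union>k\<in>{..<n}. set_prod (*) {U i k} (NS k l)) {V l j}) \<in> ratset (*) 1"
  by (intro rat_UN rat_prod Zin_rat rat_fin) auto
lemma Zset_rat: "\<forall>i j. Zset i j \<in> ratset (*) 1"
  unfolding Zset_def by (intro allI rat_union Zout_rat rat_fin) auto

lemma Zset_dsup: "dsup (Zset i j) = Zm i j"
proof -
  have A: "dsup (\<Union>k\<in>{..<n}. set_prod (*) {U i k} (NS k l)) = (\<Sum>k<n. U i k * Nm k l)" if "l < n" for l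
    using that by (simp add: dsup_UN rat_prod rat_fin NS_rat dsup_prod NS_dsup)
  have "dsup (\<Union>l\<in>{..<n}. set_prod (*) (\<Union>k\<in>{..<n}. set_prod (*) {U i k} (NS k l)) {V l j})
      = (\<Sum>l<n. (\<Sum>k<n. U i k * Nm k l) * V l j)"
    by (simp add: dsup_UN rat_prod Zin_rat rat_fin dsup_prod A)
  then show ?thesis unfolding Zset_def Zm_def madd_def mmul_def
    by (simp add: dsup_insert Zout_rat add.commute)
qed

lemma Zstep: "a \<in> Zset i k \<Longrightarrow> i < n \<Longrightarrow> k < n \<Longrightarrow> j < n \<Longrightarrow> dle (a * Nm k j) (Nm i j)"
proof -
  assume a: "a \<in> Zset i k" and idx: "i < n" "k < n" "j < n"
  have key: "dle (a * x) (Nm i j)" if x: "x \<in> NS k j" for x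
  proof -
    from a consider "a = X i k" | l k' y where "l < n" "k' < n" "y \<in> NS k' l" "a = U i k' * y * V l k"
      unfolding Zset_def by (auto elim!: sp_E)
    then show ?thesis
    proof cases
      case 1
      from NS_elem[OF x] show ?thesis
      proof
        assume "x = 0" then show ?thesis by simp
      next
        assume "Bal k j x"
        then have "Bal i j (X i k * x)" using idx by (intro Bal.BX)
        then show ?thesis using 1 bal_le_N by simp
      qed
    next
      case (2 l k' y)
      show ?thesis
      proof (cases "y = 0 \<or> x = 0")
        case True then show ?thesis using 2 by auto
      next
        case False
        then have by': "Bal k' l y" and bx: "Bal k j x" using NS_elem[OF x] NS_elem[OF 2(3)] by auto
        have "a * x = U i k' * p * y * (q * V l k) * x"
          using 2 U_comm_val[OF bal_Z[OF by'] idx(1) 2(2) 2(1) idx(2)] by simp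
        moreover have "Bal i j (U i k' * p * y * (q * V l k) * x)"
          using idx 2 by' bx by (intro Bal.BU)
        ultimately show ?thesis using bal_le_N by simp
      qed
    qed
  qed
  have "a * Nm k j = dsup (set_prod (*) {a} (NS k j))"
    using dsup_prod[OF rat_fin[of "{a}"] NS_rat[OF idx(2,3)]] NS_dsup[OF idx(2,3)] by simp
  also have "dle \<dots> (Nm i j)"
    by (rule dsup_least[OF rat_prod[OF rat_fin NS_rat[OF idx(2,3)]]]) (auto intro: key simp: set_prod_def)
  finally show ?thesis .
qed

lemma part1: "mle n (mstar n Zm) Nm"
  unfolding mle_def
proof (intro allI impI)
  fix i j assume ij: "i < n" "j < n"
  have "dle w (Nm i j)" if "pth n Zset i j w" for w
    using that
  proof (induction rule: pth.induct)
    case (nil i)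
    then show ?case using bal_le_N Bal.B1 by blast
  next
    case (cons i k m j w)
    have "dle (m * w) (m * Nm k j)" using cons by (intro dle_multL)
    moreover have "dle (m * Nm k j) (Nm i j)" using cons pth_idx[OF cons.hyps(4)] by (intro Zstep) auto
    ultimately show ?case by (rule dle_trans)
  qed
  then have "dle (dsup (paths n Zset i j)) (Nm i j)"
    by (intro dsup_least paths_rat[OF Zset_rat] ij) (auto simp: paths_def)
  moreover have "dsup (paths n Zset i j) = mstar n Zm i j"
    using bridge[of Zset Zm i n j] Zset_rat Zset_dsup ij by auto
  ultimately show "dle (mstar n Zm i j) (Nm i j)" by simp
qed

end


context setting begin

lemma part2:
  assumes sol: "mle n (mstar n (madd (mmul n (mmul n U y) V) X)) y"
  shows "mle n Nm y"
proof -
  define Ym where "Ym = madd (mmul n (mmul n U y) V) X"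
  define Yset :: "'a set mat" where
    "Yset i j = (\<Union>l\<in>{..<n}. set_prod (*) (\<Union>k\<in>{..<n}. {U i k * y k l}) {V l j}) \<union> {X i j}" for i j
  have Yin: "(\<Union>k\<in>{..<n}. {U i k * y k l}) \<in> ratset (*) 1" for i l
    by (intro rat_UN rat_fin) auto
  have Yout: "(\<Union>l\<in>{..<n}. set_prod (*) (\<Union>k\<in>{..<n}. {U i k * y k l}) {V l j}) \<in> ratset (*) 1" for i j
    by (intro rat_UN rat_prod Yin rat_fin) auto
  have YR: "\<forall>i j. Yset i j \<in> ratset (*) 1"
    unfolding Yset_def by (intro allI rat_union Yout rat_fin) auto
  have YD: "dsup (Yset i j) = Ym i j" for i j
  proof -
    have "dsup (\<Union>l\<in>{..<n}. set_prod (*) (\<Union>k\<in>{..<n}. {U i k * y k l}) {V l j})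
      = (\<Sum>l<n. (\<Sum>k<n. U i k * y k l) * V l j)"
      by (simp add: dsup_UN rat_prod Yin rat_fin dsup_prod)
    then show ?thesis unfolding Yset_def Ym_def madd_def mmul_def
      by (simp add: dsup_insert Yout add.commute)
  qed
  define Ys where "Ys = mstar n Ym"
  have YsD: "dsup (paths n Yset i j) = Ys i j" if "i < n" "j < n" for i j
    using bridge[of Yset Ym i n j] YR YD that Ys_def by auto
  have Ysy: "dle (Ys i j) (y i j)" if "i < n" "j < n" for i j
    using sol that unfolding mle_def Ym_def Ys_def by auto
  have step: "dle (a * Ys k j) (Ys i j)" if "a \<in> Yset i k" "i < n" "k < n" "j < n" for a i k j
    using gen_step[OF YR that(1-4)] YsD that by simp
  have balY: "dle x (Ys i j)" if "Bal i j x" for i j x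
    using that
  proof (induction rule: Bal.induct)
    case (B1 i)
    have "1 \<in> paths n Yset i i" unfolding paths_def using B1 by (auto intro: pth.nil)
    then show ?case using dsup_upper[OF paths_rat[OF YR B1 B1]] YsD[OF B1 B1] by simp
  next
    case (BX i k j x)
    have "j < n" using BX bal_idx by blast
    have "dle (X i k * x) (X i k * Ys k j)" using BX by (intro dle_multL)
    moreover have "dle (X i k * Ys k j) (Ys i j)" using BX \<open>j < n\<close> by (intro step) (auto simp: Yset_def)
    ultimately show ?case by (rule dle_trans)
  next
    case (BU i k l m u j x)
    have "j < n" using BU bal_idx by blast
    have "u \<in> Zs" using BU bal_Z by blast
    then have eq: "U i k * p * u * (q * V l m) * x = U i k * u * V l m * x"
      using U_comm_val BU by metis
    have "dle u (y k l)" using BU Ysy dle_trans by blast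
    then have "dle (U i k * u * V l m * x) (U i k * y k l * V l m * Ys m j)"
      using BU by (intro dle_mult dle_multL dle_multR) auto
    moreover have "U i k * y k l * V l m \<in> Yset i m" unfolding Yset_def using BU
      by (intro UnI1 UN_I[of l] sp_I UN_I[of k]) auto
    then have "dle (U i k * y k l * V l m * Ys m j) (Ys i j)" using BU \<open>j < n\<close> by (intro step) auto
    ultimately show ?case using eq dle_trans by metis
  qed
  show ?thesis unfolding mle_def
  proof (intro allI impI)
    fix i j assume ij: "i < n" "j < n"
    have "dle (dsup (NS i j)) (y i j)"
    proof (rule dsup_least[OF NS_rat[OF ij]])
      fix x assume "x \<in> NS i j"
      from NS_elem[OF this] show "dle x (y i j)"
        using balY Ysy ij dle_trans by fastforce
    qed
    then show "dle (Nm i j) (y i j)" using NS_dsup[OF ij] by simp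
  qed
qed

end


lemma reg_single: "{[x]} \<in> RegLang"
  unfolding RegLang_def by (rule ratset.fin) simp

lemma lconc_single: "lconc {[x]} {[y]} = {[x, y]}"
  unfolding lconc_def by auto

lemma gens_rho: "C2_gens \<subseteq> rho"
  unfolding rho_def by blast

lemma C2_rel:
  assumes g: "C2_morph (g :: lang \<Rightarrow> 'b::R_dioid)" and r: "({[x, y]}, R) \<in> C2_gens"
  shows "g {[x]} * g {[y]} = g R"
proof -
  have "g {[x]} * g {[y]} = g (lconc {[x]} {[y]})"
    using g reg_single unfolding C2_morph_def by metis
  also have "\<dots> = g R" using g r gens_rho unfolding C2_morph_def lconc_single by blast
  finally show ?thesis .
qed

lemma C2_rels:
  assumes g: "C2_morph (g :: lang \<Rightarrow> 'b::R_dioid)"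
  shows "g {[B]} * g {[D]} = 1" "g {[P]} * g {[Q]} = 1" "g {[B]} * g {[Q]} = 0" "g {[P]} * g {[D]} = 0"
proof -
  have one: "g {[]} = 1" and zero: "g {} = 0" using g unfolding C2_morph_def by auto
  show "g {[B]} * g {[D]} = 1" using C2_rel[OF g, of B D "{[]}"] one by (simp add: C2_gens_def)
  show "g {[P]} * g {[Q]} = 1" using C2_rel[OF g, of P Q "{[]}"] one by (simp add: C2_gens_def)
  show "g {[B]} * g {[Q]} = 0" using C2_rel[OF g, of B Q "{}"] zero by (simp add: C2_gens_def)
  show "g {[P]} * g {[D]} = 0" using C2_rel[OF g, of P D "{}"] zero by (simp add: C2_gens_def)
qed

theorem lemma3:
  fixes iK :: "'k::R_dioid \<Rightarrow> 'l::R_dioid" and iC :: "lang \<Rightarrow> 'l"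
    and n :: nat and X U V :: "'l mat"
  assumes tensor: "is_R_tensor TYPE('m::R_dioid) iK iC"
    and X: "\<forall>i<n. \<forall>j<n. X i j \<in> ZC iC"
    and U: "\<forall>i<n. \<forall>j<n. U i j \<in> {0, iC {[B]}, iC {[P]}}"
    and V: "\<forall>i<n. \<forall>j<n. V i j \<in> {0, iC {[D]}, iC {[Q]}}"
  shows "let b = iC {[B]}; p = iC {[P]}; d = iC {[D]}; q = iC {[Q]};
             N = lscal b (rscal (mstar n (madd (madd (rscal U p) X) (lscal q V))) d)
         in mle n (mstar n (madd (mmul n (mmul n U N) V) X)) N
            \<and> (\<forall>y. mle n (mstar n (madd (mmul n (mmul n U y) V) X)) y \<longrightarrow> mle n N y)
            \<and> (\<forall>i<n. \<forall>j<n. N i j \<in> ZC iC)"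
proof -
  have g: "C2_morph iC" using tensor unfolding is_R_tensor_def by (rule conjunct1[OF conjunct2])
  have Zc: "x * iC {[c]} = iC {[c]} * x" if "x \<in> ZC iC" for x c
    using that reg_single[of c] unfolding ZC_def by simp
  interpret S: setting n U X V "iC {[B]}" "iC {[P]}" "iC {[D]}" "iC {[Q]}" "ZC iC"
  proof (unfold_locales)
    show "0 \<in> ZC iC" "1 \<in> ZC iC" unfolding ZC_def by auto
    show "x * y \<in> ZC iC" if xy: "x \<in> ZC iC" "y \<in> ZC iC" for x y
      unfolding ZC_def
    proof (intro CollectI ballI)
      fix A assume A: "A \<in> RegLang"
      have "x * y * iC A = x * (iC A * y)" using xy A unfolding ZC_def by (simp add: mult.assoc)
      also have "\<dots> = iC A * x * y" using xy A unfolding ZC_def by (simp flip: mult.assoc)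
      finally show "x * y * iC A = iC A * (x * y)" by (simp add: mult.assoc)
    qed
    show "x * iC {[B]} = iC {[B]} * x" if "x \<in> ZC iC" for x using Zc[OF that] .
    show "x * iC {[P]} = iC {[P]} * x" if "x \<in> ZC iC" for x using Zc[OF that] .
    show "x * iC {[D]} = iC {[D]} * x" if "x \<in> ZC iC" for x using Zc[OF that] .
    show "x * iC {[Q]} = iC {[Q]} * x" if "x \<in> ZC iC" for x using Zc[OF that] .
    show "X i j \<in> ZC iC" if "i < n" "j < n" for i j using X that by blast
    show "U i j \<in> {0, iC {[B]}, iC {[P]}}" if "i < n" "j < n" for i j using U that by blast
    show "V i j \<in> {0, iC {[D]}, iC {[Q]}}" if "i < n" "j < n" for i j using V that by blast
  qed (rule C2_rels[OF g])+
  have N: "S.Nm = lscal (iC {[B]}) (rscal (mstar n (madd (madd (rscal U (iC {[P]})) X) (lscal (iC {[Q]}) V))) (iC {[D]}))"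
    unfolding S.Nm_def S.Mm_def ..
  have P3: "S.Nm i j \<in> ZC iC" if ij: "i < n" "j < n" for i j
    unfolding ZC_def
  proof (intro CollectI ballI)
    fix A assume "A \<in> RegLang"
    have "dsup (S.NS i j) * iC A = iC A * dsup (S.NS i j)"
      by (rule dsup_comm[OF S.NS_rat[OF ij]]) (use S.NS_Z \<open>A \<in> RegLang\<close> in \<open>auto simp: ZC_def\<close>)
    then show "S.Nm i j * iC A = iC A * S.Nm i j" using S.NS_dsup[OF ij] by simp
  qed
  have P1: "mle n (mstar n (madd (mmul n (mmul n U S.Nm) V) X)) S.Nm"
    using S.part1 unfolding S.Zm_def .
  have P2: "\<forall>y. mle n (mstar n (madd (mmul n (mmul n U y) V) X)) y \<longrightarrow> mle n S.Nm y"
    using S.part2 by blast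
  show ?thesis
    unfolding Let_def N[symmetric]
    using P1 P2 P3 by blast
qed


end
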